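(* Let $u\in\mathbb C$ and $a\in\mathbb C\setminus\{0\}$, and let $s$ range over a domain on which $(t+u)^2+s\neq0$ for all $t\in[-1,1]$, with a branch $R(t,s)=\sqrt{(t+u)^2+s}$ continuous in $t$ and holomorphic in $s$; fix $\sqrt a$ and put $\sqrt{2a}=\sqrt2\sqrt a$. For integers $\nu\ge0$ define $$I_\nu(s)=\frac{1}{\sqrt{2a}}\int_{-1}^1\frac{(t+u)^\nu\,dt}{\sqrt{t+1}\,R(t,s)} .$$ Then, writing $R_1=R(1,s)=\sqrt{(u+1)^2+s}$, $$\frac{\partial I_{\nu+2}}{\partial s}=-\frac12I_\nu-s\frac{\partial I_\nu}{\partial s},$$ $$\frac{\partial}{\partial s}(I_2+I_1)=u\frac{\partial I_1}{\partial s}-\frac14I_0+\frac{1}{2\sqrt a\,R_1},$$ $$\frac{\partial}{\partial s}(I_3-I_1)=(u^2-2u)\frac{\partial I_1}{\partial s}-\frac34I_1+\frac{u-1}{4}I_0+\frac{u}{\sqrt a\,R_1}.$$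
   Context: $\sqrt{t+1}$ denotes the nonnegative real square root for $t\in[-1,1]$. The paper considers $s\ge0$ with $u,a$ fixed parameters arising from $v,w$ via $u=v(v+2z)/(v^2-4w)$, $a=v^2-4w$. *)

theory Defs
  imports "HOL-Analysis.Analysis"
begin

definition Inu :: "complex \<Rightarrow> complex \<Rightarrow> (real \<Rightarrow> complex \<Rightarrow> complex) \<Rightarrow> nat \<Rightarrow> complex \<Rightarrow> complex" where
  "Inu u sa R \<nu> s = 1 / (complex_of_real (sqrt 2) * sa) *
     integral {-1..1} (\<lambda>t::real. (complex_of_real t + u) ^ \<nu> /
        (complex_of_real (sqrt (t + 1)) * R t s))"

end

theory Submission
  imports Defs
begin


lemma vd_iff:
  fixes f :: "real \<Rightarrow> complex"
  shows "(f has_vector_derivative v) (at x within S) \<longleftrightarrow>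
         ((\<lambda>y. (f y - f x) / of_real (y - x)) \<longlongrightarrow> v) (at x within S)"
proof -
  have ne: "\<forall>\<^sub>F y in at x within S. y \<noteq> x" by (simp add: eventually_at_filter)
  have eq: "\<forall>\<^sub>F y in at x within S. norm (f y - f x - (y - x) *\<^sub>R v) / norm (y - x)
       = norm ((f y - f x) / of_real (y - x) - v)"
  proof (rule eventually_mono[OF ne])
    fix y assume "y \<noteq> x"
    then have "of_real (y - x) \<noteq> (0::complex)" by simp
    then have "(f y - f x) / of_real (y - x) - v = (f y - f x - (y - x) *\<^sub>R v) / of_real (y - x)"
      by (simp add: field_simps scaleR_conv_of_real)
    then show "norm (f y - f x - (y - x) *\<^sub>R v) / norm (y - x)
       = norm ((f y - f x) / of_real (y - x) - v)" by (simp add: norm_divide del: of_real_diff)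
  qed
  have "(f has_vector_derivative v) (at x within S) \<longleftrightarrow>
     ((\<lambda>y. norm (f y - f x - (y - x) *\<^sub>R v) / norm (y - x)) \<longlongrightarrow> 0) (at x within S)"
    unfolding has_vector_derivative_def has_derivative_iff_norm
    by (simp add: bounded_linear_scaleR_left)
  also have "\<dots> \<longleftrightarrow> ((\<lambda>y. norm ((f y - f x) / of_real (y - x) - v)) \<longlongrightarrow> 0) (at x within S)"
    by (rule tendsto_cong[OF eq])
  also have "\<dots> \<longleftrightarrow> ((\<lambda>y. (f y - f x) / of_real (y - x)) \<longlongrightarrow> v) (at x within S)"
    by (simp add: tendsto_norm_zero_iff LIM_zero_iff)
  finally show ?thesis .
qed

lemma sqrt_vderiv:
  fixes r f :: "real \<Rightarrow> complex"
  assumes c: "continuous (at x within S) r" and sq: "\<forall>\<^sub>F y in at x within S. r y ^ 2 = f y"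
    and sqx: "r x ^ 2 = f x"
    and d: "(f has_vector_derivative f') (at x within S)" and nz: "r x \<noteq> 0"
  shows "(r has_vector_derivative f' / (2 * r x)) (at x within S)"
  unfolding vd_iff
proof -
  have l1: "((\<lambda>y. (f y - f x) / of_real (y - x)) \<longlongrightarrow> f') (at x within S)"
    using d unfolding vd_iff .
  have l2: "((\<lambda>y. r y + r x) \<longlongrightarrow> 2 * r x) (at x within S)"
    using c unfolding continuous_within by (auto intro!: tendsto_eq_intros)
  have ev: "\<forall>\<^sub>F y in at x within S. r y + r x \<noteq> 0"
    using tendsto_imp_eventually_ne[OF l2] nz by simp
  have l3: "((\<lambda>y. ((f y - f x) / of_real (y - x)) / (r y + r x)) \<longlongrightarrow> f' / (2 * r x)) (at x within S)"
    using nz by (intro tendsto_divide l1 l2) simp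
  show "((\<lambda>y. (r y - r x) / of_real (y - x)) \<longlongrightarrow> f' / (2 * r x)) (at x within S)"
  proof (rule Lim_transform_eventually[OF l3])
    show "\<forall>\<^sub>F y in at x within S. (f y - f x) / of_real (y - x) / (r y + r x) = (r y - r x) / of_real (y - x)"
      using ev sq
    proof eventually_elim
      case (elim y)
      have "f y - f x = (r y - r x) * (r y + r x)" using elim sqx by (simp add: power2_eq_square algebra_simps)
      then show ?case using elim by simp
    qed
  qed
qed

lemma sqrt_fderiv:
  fixes r f :: "complex \<Rightarrow> complex"
  assumes c: "continuous (at x within S) r" and sq: "\<forall>\<^sub>F y in at x within S. r y ^ 2 = f y"
    and sqx: "r x ^ 2 = f x"
    and d: "(f has_field_derivative f') (at x within S)" and nz: "r x \<noteq> 0"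
  shows "(r has_field_derivative f' / (2 * r x)) (at x within S)"
  unfolding has_field_derivative_iff
proof -
  have l1: "((\<lambda>y. (f y - f x) / (y - x)) \<longlongrightarrow> f') (at x within S)"
    using d unfolding has_field_derivative_iff .
  have l2: "((\<lambda>y. r y + r x) \<longlongrightarrow> 2 * r x) (at x within S)"
    using c unfolding continuous_within by (auto intro!: tendsto_eq_intros)
  have ev: "\<forall>\<^sub>F y in at x within S. r y + r x \<noteq> 0"
    using tendsto_imp_eventually_ne[OF l2] nz by simp
  have l3: "((\<lambda>y. ((f y - f x) / (y - x)) / (r y + r x)) \<longlongrightarrow> f' / (2 * r x)) (at x within S)"
    using nz by (intro tendsto_divide l1 l2) simp
  show "((\<lambda>y. (r y - r x) / (y - x)) \<longlongrightarrow> f' / (2 * r x)) (at x within S)"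
  proof (rule Lim_transform_eventually[OF l3])
    show "\<forall>\<^sub>F y in at x within S. (f y - f x) / (y - x) / (r y + r x) = (r y - r x) / (y - x)"
      using ev sq
    proof eventually_elim
      case (elim y)
      have "f y - f x = (r y - r x) * (r y + r x)" using elim sqx by (simp add: power2_eq_square algebra_simps)
      then show ?case using elim by simp
    qed
  qed
qed

lemma subst_sqrt:
  fixes \<phi> :: "real \<Rightarrow> complex"
  assumes cont: "continuous_on {0..sqrt 2} \<phi>"
  shows "((\<lambda>t. \<phi> (sqrt (t+1)) / of_real (sqrt (t+1))) has_integral 2 * integral {0..sqrt 2} \<phi>) {-1..1}"
proof -
  define \<Phi> where "\<Phi> w = integral {0..w} \<phi>" for w
  have d\<Phi>: "(\<Phi> has_vector_derivative \<phi> w) (at w within {0..sqrt 2})" if "w \<in> {0..sqrt 2}" for w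
    unfolding \<Phi>_def by (rule integral_has_vector_derivative[OF cont that])
  have c\<Phi>: "continuous_on {0..sqrt 2} \<Phi>"
    using d\<Phi> by (rule continuous_on_vector_derivative)
  define \<Psi> where "\<Psi> t = 2 * \<Phi> (sqrt (t+1))" for t
  have im: "(\<lambda>t. sqrt (t+1)) ` {-1..1} \<subseteq> {0..sqrt 2}" by auto
  have c\<Psi>: "continuous_on {-1..1} \<Psi>"
    unfolding \<Psi>_def
    by (intro continuous_intros continuous_on_compose2[OF c\<Phi> _ im]) 
  have d\<Psi>: "(\<Psi> has_vector_derivative \<phi> (sqrt (t+1)) / of_real (sqrt (t+1))) (at t)"
    if t: "t \<in> {-1<..<1}" for t
  proof -
    have p: "0 < t + 1" using t by simp
    have w: "0 < sqrt (t+1)" "sqrt (t+1) < sqrt 2" using t by auto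
    have ds: "((\<lambda>t. sqrt (t+1)) has_real_derivative inverse (sqrt (t+1)) / 2) (at t)"
      using p by (auto intro!: derivative_eq_intros)
    have dP: "(\<Phi> has_vector_derivative \<phi> (sqrt (t+1))) (at (sqrt (t+1)))"
      using d\<Phi>[of "sqrt (t+1)"] w by (simp add: at_within_Icc_at)
    have "((\<Phi> \<circ> (\<lambda>t. sqrt (t+1))) has_vector_derivative (inverse (sqrt (t+1)) / 2) *\<^sub>R \<phi> (sqrt (t+1))) (at t)"
      by (rule vector_diff_chain_at[OF ds[unfolded has_real_derivative_iff_has_vector_derivative] dP])
    then have "((\<lambda>t. 2 * \<Phi> (sqrt (t+1))) has_vector_derivative 2 * ((inverse (sqrt (t+1)) / 2) *\<^sub>R \<phi> (sqrt (t+1)))) (at t)"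
      by (intro has_vector_derivative_mult_right) (simp add: o_def)
    moreover have "2 * ((inverse (sqrt (t+1)) / 2) *\<^sub>R \<phi> (sqrt (t+1))) = \<phi> (sqrt (t+1)) / of_real (sqrt (t+1))"
      by (simp add: scaleR_conv_of_real field_simps)
    ultimately show ?thesis unfolding \<Psi>_def by simp
  qed
  have "((\<lambda>t. \<phi> (sqrt (t+1)) / of_real (sqrt (t+1))) has_integral (\<Psi> 1 - \<Psi> (-1))) {-1..1}"
    by (rule fundamental_theorem_of_calculus_interior[OF _ c\<Psi> d\<Psi>]) simp
  moreover have "\<Psi> 1 - \<Psi> (-1) = 2 * integral {0..sqrt 2} \<phi>"
    unfolding \<Psi>_def \<Phi>_def by simp
  ultimately show ?thesis by simp
qed



lemma branch:
  fixes \<rho> :: "complex \<Rightarrow> complex" and Q s :: complex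
  assumes c: "continuous_on (ball s r) \<rho>"
    and sq: "\<forall>z\<in>ball s r. \<rho> z ^ 2 = Q + (z - s)"
    and rQ: "r \<le> norm Q"
  shows "\<forall>z\<in>ball s r. \<rho> z = \<rho> s * csqrt (1 + (z - s) / Q)"
proof (cases "r > 0")
  case False then have "ball s r = {}" by (simp add: ball_empty)
  then show ?thesis by blast
next
  case True
  have Q: "Q \<noteq> 0" using rQ True by auto
  have sb: "s \<in> ball s r" using True by simp
  have \<rho>s: "\<rho> s ^ 2 = Q" using sq sb by simp
  have \<rho>s0: "\<rho> s \<noteq> 0" using \<rho>s Q by auto
  have small: "norm ((z - s) / Q) < 1" if "z \<in> ball s r" for z
    using that rQ Q by (simp add: norm_divide dist_norm norm_minus_commute divide_less_eq)
  have Re: "0 < Re (1 + (z - s) / Q)" if "z \<in> ball s r" for z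
    using small[OF that] abs_Re_le_cmod[of "(z - s) / Q"] by simp
  have notneg: "1 + (z - s) / Q \<notin> \<real>\<^sub>\<le>\<^sub>0" if "z \<in> ball s r" for z
    using Re[OF that] by (auto simp: complex_nonpos_Reals_iff)
  have nz: "csqrt (1 + (z - s) / Q) \<noteq> 0" if "z \<in> ball s r" for z
    using Re[OF that] by (metis csqrt_eq_0 less_irrefl zero_complex.sel(1))
  define h where "h z = \<rho> z / (\<rho> s * csqrt (1 + (z - s) / Q))" for z
  have ch: "continuous_on (ball s r) h"
    unfolding h_def
    using \<rho>s0 nz Q
    by (intro continuous_intros c continuous_on_compose2[OF continuous_on_csqrt]) (auto dest: notneg)
  have h2: "h z ^ 2 = 1" if "z \<in> ball s r" for z
  proof -
    have "h z ^ 2 = \<rho> z ^ 2 / (\<rho> s ^ 2 * (1 + (z - s) / Q))"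
      unfolding h_def by (simp add: power_divide power_mult_distrib)
    also have "\<dots> = (Q + (z - s)) / (Q * (1 + (z - s) / Q))" using sq that \<rho>s by simp
    also have "\<dots> = 1"
    proof -
      have a: "1 + (z - s) / Q \<noteq> 0" using Re[OF that] by (metis less_irrefl zero_complex.sel(1))
      have b: "Q * (1 + (z - s) / Q) = Q + (z - s)" using Q by (simp add: field_simps)
      show ?thesis unfolding b using a Q b by (metis divide_self mult_eq_0_iff)
    qed
    finally show ?thesis .
  qed
  have "h ` ball s r \<subseteq> {1, -1}"
    using h2 by (force simp: power2_eq_1_iff)
  then have fin: "finite (h ` ball s r)" by (rule finite_subset) simp
  have const: "h constant_on ball s r"
    by (rule continuous_finite_range_constant[OF connected_ball ch fin])
  have hs: "h s = 1" unfolding h_def using \<rho>s0 by simp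
  show ?thesis
  proof
    fix z assume z: "z \<in> ball s r"
    then have "h z = 1" using const hs sb by (metis constant_on_def)
    then show "\<rho> z = \<rho> s * csqrt (1 + (z - s) / Q)"
      unfolding h_def using \<rho>s0 nz[OF z] by (simp add: divide_eq_eq)
  qed
qed

lemma alg2:
  fixes c X Y K E1 E2 u :: complex
  assumes "K - 2 * (E2 + (1 - u) * E1) = X" "c * X = Y"
  shows "- c * E2 + - c * E1 = u * (- c * E1) - 1/4 * (c * (2 * K)) + Y / 2"
proof -
  have e2: "E2 = (K - X) / 2 - (1 - u) * E1" using assms(1) by (auto simp: field_simps)
  show ?thesis unfolding e2 assms(2)[symmetric] by (simp add: field_simps)
qed
lemma alg3:
  fixes c X Y K0 K1 E1 E2 E3 u :: complex
  assumes "K0 - 2 * (E2 + (1 - u) * E1) = X"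
    and "3 * K1 + 2 * (1 - u) * K0 - 2 * (E3 + (1 - u) * E2) = X * (1 + u)"
    and "c * X = Y"
  shows "- c * E3 - - c * E1 = (u^2 - 2*u) * (- c * E1) - 3/4 * (c * (2 * K1)) + (u - 1) / 4 * (c * (2 * K0)) + u * Y"
proof -
  have e2: "E2 = (K0 - X) / 2 - (1 - u) * E1" using assms(1) by (auto simp: field_simps)
  have e3: "E3 = (3 * K1 + 2 * (1 - u) * K0 - X * (1 + u)) / 2 - (1 - u) * E2" using assms(2) by (auto simp: field_simps)
  show ?thesis unfolding e3 e2 assms(3)[symmetric] by (simp add: field_simps power2_eq_square)
qed


lemma notneg_small:
  fixes d Q :: complex
  assumes "norm d < norm Q"
  shows "1 + d / Q \<notin> \<real>\<^sub>\<le>\<^sub>0"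
proof -
  have Q: "Q \<noteq> 0" using assms by auto
  have "norm (d / Q) < 1" using assms Q by (simp add: norm_divide divide_less_eq)
  then have "0 < Re (1 + d / Q)" using abs_Re_le_cmod[of "d / Q"] by simp
  then show ?thesis by (auto simp: complex_nonpos_Reals_iff)
qed

theorem lemma3p3:
  fixes u a sa s :: complex and S :: "complex set" and R :: "real \<Rightarrow> complex \<Rightarrow> complex"
  assumes "a \<noteq> 0" and "sa ^ 2 = a"
    and "open S"
    and "\<forall>t\<in>{-1..1}. \<forall>z\<in>S. (complex_of_real t + u) ^ 2 + z \<noteq> 0"
    and "\<forall>t\<in>{-1..1}. \<forall>z\<in>S. (R t z) ^ 2 = (complex_of_real t + u) ^ 2 + z"
    and "\<forall>z\<in>S. continuous_on {-1..1} (\<lambda>t. R t z)"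
    and "\<forall>t\<in>{-1..1}. (\<lambda>z. R t z) holomorphic_on S"
    and "s \<in> S"
  shows "(\<forall>\<nu>. deriv (Inu u sa R (\<nu> + 2)) s
            = - (1/2) * Inu u sa R \<nu> s - s * deriv (Inu u sa R \<nu>) s)
      \<and> deriv (\<lambda>z. Inu u sa R 2 z + Inu u sa R 1 z) s
            = u * deriv (Inu u sa R 1) s - (1/4) * Inu u sa R 0 s + 1 / (2 * sa * R 1 s)
      \<and> deriv (\<lambda>z. Inu u sa R 3 z - Inu u sa R 1 z) s
            = (u^2 - 2*u) * deriv (Inu u sa R 1) s - (3/4) * Inu u sa R 1 s
              + (u - 1) / 4 * Inu u sa R 0 s + u / (sa * R 1 s)"
proof -
  note nz0 = assms(4) and sq0 = assms(5) and ct0 = assms(6) and hol0 = assms(7)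
  define T where "T = {0..sqrt 2::real}"
  define gg where "gg w = complex_of_real (w^2 - 1) + u" for w
  define \<rho> where "\<rho> w z = R (w^2 - 1) z" for w z
  define c where "c = 1 / (complex_of_real (sqrt 2) * sa)"
  have wT: "w^2 - 1 \<in> {-1..1}" if "w \<in> T" for w
  proof -
    have "w^2 \<le> (sqrt 2)^2" using that unfolding T_def by (intro power_mono) auto
    then show ?thesis by simp
  qed
  have sqT: "\<rho> w z ^ 2 = gg w ^ 2 + z" if "w \<in> T" "z \<in> S" for w z
    using sq0 wT[OF that(1)] that(2) unfolding \<rho>_def gg_def by blast
  have nzT: "\<rho> w z \<noteq> 0" if "w \<in> T" "z \<in> S" for w z
    using sqT[OF that] nz0 wT[OF that(1)] that(2) unfolding gg_def by fastforce
  have nzq: "gg w ^ 2 + z \<noteq> 0" if "w \<in> T" "z \<in> S" for w z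
    using nz0 wT[OF that(1)] that(2) unfolding gg_def by blast
  have cT: "continuous_on T (\<lambda>w. \<rho> w z)" if "z \<in> S" for z
    unfolding \<rho>_def
    by (rule continuous_on_compose2[OF ct0[rule_format, OF that]]) (auto intro!: continuous_intros wT)
  have cgg: "continuous_on T gg" unfolding gg_def by (intro continuous_intros)
  obtain w0 where w0: "w0 \<in> T" "\<forall>w\<in>T. norm (gg w0 ^ 2 + s) \<le> norm (gg w ^ 2 + s)"
  proof -
    have "continuous_on T (\<lambda>w. norm (gg w ^ 2 + s))" using cgg by (intro continuous_intros)
    then show ?thesis using continuous_attains_inf[of T "\<lambda>w. norm (gg w ^ 2 + s)"] that
      unfolding T_def by auto
  qed
  define m where "m = norm (gg w0 ^ 2 + s)"
  have m: "0 < m" "\<And>w. w \<in> T \<Longrightarrow> m \<le> norm (gg w ^ 2 + s)"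
    using nzq[OF w0(1) assms(8)] w0 unfolding m_def by auto
  obtain r0 where r0: "0 < r0" "ball s r0 \<subseteq> S" using assms(3,8) openE by blast
  define B where "B = ball s (min r0 m)"
  have BS: "B \<subseteq> S" using r0 unfolding B_def by auto
  have sB: "s \<in> B" using r0 m unfolding B_def by auto
  have oB: "open B" "convex B" unfolding B_def by auto
  have formula: "\<rho> w z = \<rho> w s * csqrt (1 + (z - s) / (gg w ^ 2 + s))" if "w \<in> T" "z \<in> B" for w z
  proof -
    have "continuous_on (ball s (min r0 m)) (\<lambda>z. \<rho> w z)"
      using holomorphic_on_imp_continuous_on[OF hol0[rule_format, OF wT[OF that(1)]]] BS
      unfolding \<rho>_def B_def by (rule continuous_on_subset)
    moreover have "\<forall>z\<in>ball s (min r0 m). \<rho> w z ^ 2 = (gg w ^ 2 + s) + (z - s)"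
      using sqT[OF that(1)] BS unfolding B_def by auto
    moreover have "min r0 m \<le> norm (gg w ^ 2 + s)" using m(2)[OF that(1)] by simp
    ultimately show ?thesis using branch[of s "min r0 m" "\<lambda>z. \<rho> w z" "gg w ^ 2 + s"] that(2)
      unfolding B_def by blast
  qed
  have joint: "continuous_on (B \<times> T) (\<lambda>p. \<rho> (snd p) (fst p))"
  proof (rule continuous_on_eq)
    show "continuous_on (B \<times> T) (\<lambda>p. \<rho> (snd p) s * csqrt (1 + (fst p - s) / (gg (snd p) ^ 2 + s)))"
    proof (intro continuous_intros)
      show "continuous_on (B \<times> T) (\<lambda>p. \<rho> (snd p) s)"
        by (rule continuous_on_compose2[OF cT[OF assms(8)] continuous_on_snd]) auto
      show "continuous_on (B \<times> T) (\<lambda>x. csqrt (1 + (fst x - s) / (gg (snd x) ^ 2 + s)))"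
      proof (rule continuous_on_compose2[OF continuous_on_csqrt])
        show "continuous_on (B \<times> T) (\<lambda>x. 1 + (fst x - s) / (gg (snd x) ^ 2 + s))"
          using nzq assms(8) unfolding gg_def
          by (intro continuous_intros) auto
        show "(\<lambda>x. 1 + (fst x - s) / (gg (snd x) ^ 2 + s)) ` (B \<times> T) \<subseteq> - \<real>\<^sub>\<le>\<^sub>0"
        proof clarsimp
          fix z w assume z: "z \<in> B" and w: "w \<in> T" and neg: "1 + (z - s) / (gg w ^ 2 + s) \<in> \<real>\<^sub>\<le>\<^sub>0"
          have "norm (z - s) < m" using z unfolding B_def by (simp add: dist_norm norm_minus_commute)
          then have "norm (z - s) < norm (gg w ^ 2 + s)" using m(2)[OF w] by simp
          then show False using notneg_small neg by blast
        qed
      qed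
    qed
    show "\<And>p. p \<in> B \<times> T \<Longrightarrow> \<rho> (snd p) s * csqrt (1 + (fst p - s) / (gg (snd p) ^ 2 + s)) = \<rho> (snd p) (fst p)"
      using formula by auto
  qed
  have zderiv: "((\<lambda>z. \<rho> w z) has_field_derivative 1 / (2 * \<rho> w z)) (at z)" if w: "w \<in> T" and z: "z \<in> S" for w z
  proof -
    have "continuous (at z) (\<lambda>z. \<rho> w z)"
      unfolding \<rho>_def
      by (rule field_differentiable_imp_continuous_at[OF holomorphic_on_imp_differentiable_at[OF hol0[rule_format, OF wT[OF w]] assms(3) z]])
    moreover have "\<forall>\<^sub>F y in at z. \<rho> w y ^ 2 = gg w ^ 2 + y"
      using eventually_at_in_open'[OF assms(3) z] by eventually_elim (rule sqT[OF w])
    moreover have "((\<lambda>y. gg w ^ 2 + y) has_field_derivative 1) (at z)"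
      by (auto intro!: derivative_eq_intros)
    ultimately show ?thesis using sqrt_fderiv[of z UNIV "\<lambda>z. \<rho> w z" "\<lambda>y. gg w ^ 2 + y" 1] sqT[OF w z] nzT[OF w z]
      by simp
  qed
  define K where "K \<nu> z = integral T (\<lambda>w. gg w ^ \<nu> / \<rho> w z)" for \<nu> z
  define E where "E \<nu> = integral T (\<lambda>w. gg w ^ \<nu> / \<rho> w s ^ 3)" for \<nu>
  have cTs: "continuous_on T (\<lambda>w. gg w ^ n / \<rho> w z ^ k)" if "z \<in> S" for n k z
    using nzT that by (intro continuous_on_divide continuous_on_power cT[OF that] cgg) auto
  have intg: "(\<lambda>w. gg w ^ n / \<rho> w z ^ k) integrable_on T" if "z \<in> S" for n k z
    using cTs[OF that] unfolding T_def by (rule integrable_continuous_interval)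
  have Kd: "(K \<nu> has_field_derivative (-1/2) * E \<nu>) (at s)" for \<nu>
  proof -
    have "((\<lambda>z. integral (cbox 0 (sqrt 2)) (\<lambda>w. gg w ^ \<nu> / \<rho> w z)) has_field_derivative
        integral (cbox 0 (sqrt 2)) (\<lambda>w. (-1/2) * (gg w ^ \<nu> / \<rho> w s ^ 3))) (at s within B)"
    proof (rule leibniz_rule_field_derivative[where fx = "\<lambda>z w. (-1/2) * (gg w ^ \<nu> / \<rho> w z ^ 3)"])
      fix z w assume z: "z \<in> B" and w: "w \<in> cbox 0 (sqrt 2)"
      have w': "w \<in> T" using w unfolding T_def cbox_interval .
      have zS: "z \<in> S" using z BS by auto
      have d: "((\<lambda>z. gg w ^ \<nu> / \<rho> w z) has_field_derivative
          (0 * \<rho> w z - gg w ^ \<nu> * (1 / (2 * \<rho> w z))) / (\<rho> w z * \<rho> w z)) (at z)"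
        by (rule DERIV_divide[OF DERIV_const zderiv[OF w' zS] nzT[OF w' zS]])
      have e: "(0 * \<rho> w z - gg w ^ \<nu> * (1 / (2 * \<rho> w z))) / (\<rho> w z * \<rho> w z)
          = (-1/2) * (gg w ^ \<nu> / \<rho> w z ^ 3)"
        using nzT[OF w' zS] by (simp add: field_simps power3_eq_cube)
      show "((\<lambda>z. gg w ^ \<nu> / \<rho> w z) has_field_derivative (-1/2) * (gg w ^ \<nu> / \<rho> w z ^ 3)) (at z within B)"
        by (rule has_field_derivative_at_within[OF DERIV_cong[OF d e]])
    next
      fix z assume z: "z \<in> B"
      then show "(\<lambda>w. gg w ^ \<nu> / \<rho> w z) integrable_on cbox 0 (sqrt 2)"
        using intg[of z \<nu> 1] BS unfolding T_def cbox_interval by auto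
    next
      show "continuous_on (B \<times> cbox 0 (sqrt 2)) (\<lambda>(z, w). (-1/2) * (gg w ^ \<nu> / \<rho> w z ^ 3))"
      proof -
        have c1: "continuous_on (B \<times> T) (\<lambda>p. gg (snd p))"
          by (rule continuous_on_compose2[OF cgg continuous_on_snd[OF continuous_on_id]]) auto
        have n1: "\<forall>p\<in>B \<times> T. \<rho> (snd p) (fst p) ^ 3 \<noteq> 0"
          using nzT BS by auto
        have "continuous_on (B \<times> T) (\<lambda>p. (-1/2) * (gg (snd p) ^ \<nu> / \<rho> (snd p) (fst p) ^ 3))"
          using n1 by (intro continuous_on_mult continuous_on_const continuous_on_divide continuous_on_power c1 joint) auto
        then show ?thesis unfolding case_prod_unfold cbox_interval T_def .
      qed
    next
      show "s \<in> B" by (rule sB)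
    next
      show "convex B" by (rule oB(2))
    qed
    then show ?thesis
      unfolding K_def E_def T_def cbox_interval integral_mult_right at_within_open[OF sB oB(1)] .
  qed
  have Ieq: "Inu u sa R \<nu> z = c * (2 * K \<nu> z)" if z: "z \<in> S" for \<nu> z
  proof -
    have "((\<lambda>t. (gg (sqrt (t+1)) ^ \<nu> / \<rho> (sqrt (t+1)) z) / of_real (sqrt (t+1))) has_integral 2 * K \<nu> z) {-1..1}"
    proof -
      have c1: "continuous_on {0..sqrt 2} (\<lambda>w. gg w ^ \<nu> / \<rho> w z)"
        using cTs[OF z, of \<nu> 1] unfolding T_def by simp
      show ?thesis using subst_sqrt[OF c1] unfolding K_def T_def .
    qed
    then have "((\<lambda>t. (complex_of_real t + u) ^ \<nu> / (complex_of_real (sqrt (t + 1)) * R t z)) has_integral 2 * K \<nu> z) {-1..1}"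
      by (rule has_integral_eq[rotated]) (simp add: gg_def \<rho>_def)
    then show ?thesis unfolding Inu_def c_def by (simp add: integral_unique)
  qed
  have Id: "(Inu u sa R \<nu> has_field_derivative c * (2 * ((-1/2) * E \<nu>))) (at s)" for \<nu>
  proof (rule has_field_derivative_transform_within_open[OF _ assms(3,8)])
    show "((\<lambda>z. c * (2 * K \<nu> z)) has_field_derivative c * (2 * ((-1/2) * E \<nu>))) (at s)"
      by (intro DERIV_cmult Kd)
    show "\<And>z. z \<in> S \<Longrightarrow> c * (2 * K \<nu> z) = Inu u sa R \<nu> z" using Ieq by simp
  qed
  have Id': "(Inu u sa R \<nu> has_field_derivative - c * E \<nu>) (at s)" for \<nu>
    using Id[of \<nu>] by (rule DERIV_cong) simp
  have dI: "deriv (Inu u sa R \<nu>) s = - c * E \<nu>" for \<nu>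
    by (rule DERIV_imp_deriv[OF Id'])
  have I0: "Inu u sa R \<nu> s = c * (2 * K \<nu> s)" for \<nu> using Ieq[OF assms(8)] .
  have intg1: "(\<lambda>w. gg w ^ n / \<rho> w s) integrable_on T" for n using intg[OF assms(8), of n 1] by simp
  have intg3: "(\<lambda>w. gg w ^ n / \<rho> w s ^ 3) integrable_on T" for n using intg[OF assms(8), of n 3] .
  have Erec: "E (\<nu> + 2) = K \<nu> s - s * E \<nu>" for \<nu>
  proof -
    have "E (\<nu> + 2) = integral T (\<lambda>w. gg w ^ \<nu> / \<rho> w s - s * (gg w ^ \<nu> / \<rho> w s ^ 3))"
      unfolding E_def
    proof (rule integral_cong)
      fix w assume w: "w \<in> T"
      have nz: "\<rho> w s \<noteq> 0" by (rule nzT[OF w assms(8)])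
      have r3: "\<rho> w s ^ 3 = \<rho> w s * (gg w ^ 2 + s)"
        using sqT[OF w assms(8)] by (simp add: power3_eq_cube power2_eq_square)
      have q: "gg w ^ 2 + s \<noteq> 0" by (rule nzq[OF w assms(8)])
      show "gg w ^ (\<nu> + 2) / \<rho> w s ^ 3 = gg w ^ \<nu> / \<rho> w s - s * (gg w ^ \<nu> / \<rho> w s ^ 3)"
      proof -
        have "gg w ^ \<nu> / \<rho> w s - s * (gg w ^ \<nu> / (\<rho> w s * (gg w ^ 2 + s)))
            = (gg w ^ \<nu> * (gg w ^ 2 + s) - s * gg w ^ \<nu>) / (\<rho> w s * (gg w ^ 2 + s))"
          using q by (simp add: diff_divide_distrib)
        also have "\<dots> = gg w ^ (\<nu> + 2) / (\<rho> w s * (gg w ^ 2 + s))"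
          by (simp add: algebra_simps power_add power2_eq_square)
        finally show ?thesis unfolding r3 by simp
      qed
    qed
    also have "\<dots> = K \<nu> s - s * E \<nu>"
      unfolding K_def E_def integral_diff[OF intg1 integrable_on_mult_right[OF intg3]] integral_mult_right ..
    finally show ?thesis .
  qed
  have sS: "s \<in> S" by (rule assms(8))
  have intT: "interior T = {0<..<sqrt 2}" unfolding T_def by simp
  have TI: "w \<in> T" if "w \<in> {0<..<sqrt 2}" for w using that unfolding T_def by auto
  have dgg: "(gg has_vector_derivative 2 * of_real w) (at w)" for w
  proof -
    have D: "((\<lambda>w. w^2 - 1) has_real_derivative 2 * w) (at w)"
      by (auto intro!: derivative_eq_intros)
    show ?thesis unfolding gg_def
      by (rule has_vector_derivative_eq_rhs[OF has_vector_derivative_add[OF has_vector_derivative_of_real[OF D] has_vector_derivative_const]]) simp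
  qed
  have ww: "of_real w * of_real w = gg w - u + 1" for w
    unfolding gg_def by (simp add: power2_eq_square)
  have rd: "((\<lambda>w. \<rho> w s) has_vector_derivative 2 * of_real w * gg w / \<rho> w s) (at w)"
    if w: "w \<in> {0<..<sqrt 2}" for w
  proof -
    have f1: "continuous (at w) (\<lambda>w. \<rho> w s)"
      using continuous_on_interior[OF cT[OF sS]] w intT by simp
    have f2: "\<forall>\<^sub>F y in at w. \<rho> y s ^ 2 = gg y * gg y + s"
      using eventually_at_in_open'[OF open_greaterThanLessThan w]
      by eventually_elim (use sqT[OF TI sS] in \<open>simp add: power2_eq_square\<close>)
    have f3: "\<rho> w s ^ 2 = gg w * gg w + s" using sqT[OF TI[OF w] sS] by (simp add: power2_eq_square)
    have f4: "((\<lambda>y. gg y * gg y + s) has_vector_derivative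
        gg w * (2 * of_real w) + (2 * of_real w) * gg w + 0) (at w)"
      by (intro has_vector_derivative_add has_vector_derivative_mult dgg has_vector_derivative_const)
    from sqrt_vderiv[OF f1 f2 f3 f4 nzT[OF TI[OF w] sS]] show ?thesis
      by (rule has_vector_derivative_eq_rhs) (simp add: field_simps)
  qed
  have dinv: "((\<lambda>w. inverse (\<rho> w s)) has_vector_derivative
      (2 * of_real w * gg w / \<rho> w s) * (- (inverse (\<rho> w s) ^ Suc (Suc 0)))) (at w)"
    if w: "w \<in> {0<..<sqrt 2}" for w
    using field_vector_diff_chain_at[OF rd[OF w] DERIV_inverse[OF nzT[OF TI[OF w] sS]]]
    by (simp add: o_def)
  have dx: "((\<lambda>w. complex_of_real w) has_vector_derivative 1) (at w)" for w
    using has_vector_derivative_of_real[OF DERIV_ident, of "at w"] by simp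
  have Rsq2: "\<rho> (sqrt 2) s = R 1 s" unfolding \<rho>_def by simp
  have ggsq2: "gg (sqrt 2) = 1 + u" unfolding gg_def by simp
  have R1: "R 1 s \<noteq> 0" using nzT[of "sqrt 2" s] sS Rsq2 unfolding T_def by simp
  have cinv: "continuous_on T (\<lambda>w. inverse (\<rho> w s))"
    using nzT sS by (intro continuous_on_inverse cT[OF sS]) auto
  have cx: "continuous_on T (\<lambda>w. complex_of_real w)" by (intro continuous_intros)
  define d1 where "d1 w = gg w ^ 0 / \<rho> w s - 2 * (gg w ^ 2 / \<rho> w s ^ 3 + (1 - u) * (gg w ^ 1 / \<rho> w s ^ 3))" for w
  have P1: "K 0 s - 2 * (E 2 + (1 - u) * E 1) = of_real (sqrt 2) / R 1 s"
  proof -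
    have "(d1 has_integral (of_real (sqrt 2) * inverse (\<rho> (sqrt 2) s) - of_real 0 * inverse (\<rho> 0 s))) {0..sqrt 2}"
    proof (rule fundamental_theorem_of_calculus_interior)
      show "continuous_on {0..sqrt 2} (\<lambda>w. complex_of_real w * inverse (\<rho> w s))"
        using continuous_on_mult[OF cx cinv] unfolding T_def .
      fix w assume w: "w \<in> {0<..<sqrt 2}"
      have nz: "\<rho> w s \<noteq> 0" by (rule nzT[OF TI[OF w] sS])
      have "((\<lambda>w. complex_of_real w * inverse (\<rho> w s)) has_vector_derivative
          of_real w * ((2 * of_real w * gg w / \<rho> w s) * (- (inverse (\<rho> w s) ^ Suc (Suc 0)))) + 1 * inverse (\<rho> w s)) (at w)"
        by (rule has_vector_derivative_mult[OF dx dinv[OF w]])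
      moreover have "of_real w * ((2 * of_real w * gg w / \<rho> w s) * (- (inverse (\<rho> w s) ^ Suc (Suc 0)))) + 1 * inverse (\<rho> w s)
          = d1 w"
      proof -
        have "of_real w * ((2 * of_real w * gg w / \<rho> w s) * (- (inverse (\<rho> w s) ^ Suc (Suc 0)))) + 1 * inverse (\<rho> w s)
            = 1 / \<rho> w s - 2 * (of_real w * of_real w) * gg w / \<rho> w s ^ 3"
          using nz by (simp add: field_simps power3_eq_cube power2_eq_square)
        also have "\<dots> = d1 w" unfolding ww d1_def using nz by (simp add: field_simps power2_eq_square)
        finally show ?thesis .
      qed
      ultimately show "((\<lambda>w. complex_of_real w * inverse (\<rho> w s)) has_vector_derivative d1 w) (at w)"
        by simp
    qed simp
    moreover have "(d1 has_integral (K 0 s - 2 * (E 2 + (1 - u) * E 1))) {0..sqrt 2}"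
      unfolding d1_def K_def E_def T_def[symmetric]
      by (intro has_integral_diff has_integral_mult_right has_integral_add integrable_integral intg1 intg3)
    ultimately show ?thesis using Rsq2 by (simp add: has_integral_unique divide_inverse)
  qed
  define d2 where "d2 w = 3 * (gg w ^ 1 / \<rho> w s) + 2 * (1 - u) * (gg w ^ 0 / \<rho> w s)
     - 2 * (gg w ^ 3 / \<rho> w s ^ 3 + (1 - u) * (gg w ^ 2 / \<rho> w s ^ 3))" for w
  have P2: "3 * K 1 s + 2 * (1 - u) * K 0 s - 2 * (E 3 + (1 - u) * E 2) = of_real (sqrt 2) / R 1 s * (1 + u)"
  proof -
    have A: "(d2 has_integral (of_real (sqrt 2) * gg (sqrt 2) * inverse (\<rho> (sqrt 2) s) - of_real 0 * gg 0 * inverse (\<rho> 0 s))) {0..sqrt 2}"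
    proof (rule fundamental_theorem_of_calculus_interior)
      show "continuous_on {0..sqrt 2} (\<lambda>w. complex_of_real w * gg w * inverse (\<rho> w s))"
        using continuous_on_mult[OF continuous_on_mult[OF cx cgg] cinv] unfolding T_def .
      fix w assume w: "w \<in> {0<..<sqrt 2}"
      have nz: "\<rho> w s \<noteq> 0" by (rule nzT[OF TI[OF w] sS])
      have "((\<lambda>w. complex_of_real w * gg w * inverse (\<rho> w s)) has_vector_derivative
          (of_real w * gg w) * ((2 * of_real w * gg w / \<rho> w s) * (- (inverse (\<rho> w s) ^ Suc (Suc 0))))
           + (of_real w * (2 * of_real w) + 1 * gg w) * inverse (\<rho> w s)) (at w)"
        by (rule has_vector_derivative_mult[OF has_vector_derivative_mult[OF dx dgg] dinv[OF w]])
      moreover have "(of_real w * gg w) * ((2 * of_real w * gg w / \<rho> w s) * (- (inverse (\<rho> w s) ^ Suc (Suc 0))))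
           + (of_real w * (2 * of_real w) + 1 * gg w) * inverse (\<rho> w s) = d2 w"
      proof -
        have "(of_real w * gg w) * ((2 * of_real w * gg w / \<rho> w s) * (- (inverse (\<rho> w s) ^ Suc (Suc 0))))
           + (of_real w * (2 * of_real w) + 1 * gg w) * inverse (\<rho> w s)
            = gg w / \<rho> w s + 2 * (of_real w * of_real w) / \<rho> w s - 2 * (of_real w * of_real w) * gg w ^ 2 / \<rho> w s ^ 3"
          using nz by (simp add: field_simps power3_eq_cube power2_eq_square)
        also have "\<dots> = d2 w" unfolding ww d2_def using nz by (simp add: field_simps power2_eq_square power3_eq_cube)
        finally show ?thesis .
      qed
      ultimately show "((\<lambda>w. complex_of_real w * gg w * inverse (\<rho> w s)) has_vector_derivative d2 w) (at w)"
        by simp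
    qed simp
    have B: "(d2 has_integral (3 * K 1 s + 2 * (1 - u) * K 0 s - 2 * (E 3 + (1 - u) * E 2))) {0..sqrt 2}"
      unfolding d2_def K_def E_def T_def[symmetric]
      by (intro has_integral_diff has_integral_mult_right has_integral_add integrable_integral intg1 intg3)
    show ?thesis using has_integral_unique[OF B A] Rsq2 ggsq2 by (simp add: divide_inverse ac_simps)
  qed
  have sa0: "sa \<noteq> 0" using assms(1,2) by auto
  have cX: "c * (of_real (sqrt 2) / R 1 s) = 1 / (sa * R 1 s)"
    unfolding c_def using sa0 R1 by (simp add: field_simps)
  have G1: "\<forall>\<nu>. deriv (Inu u sa R (\<nu> + 2)) s = - (1/2) * Inu u sa R \<nu> s - s * deriv (Inu u sa R \<nu>) s"
    unfolding dI I0 Erec by (simp add: algebra_simps)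
  have G2: "deriv (\<lambda>z. Inu u sa R 2 z + Inu u sa R 1 z) s
            = u * deriv (Inu u sa R 1) s - (1/4) * Inu u sa R 0 s + 1 / (2 * sa * R 1 s)"
  proof -
    have "deriv (\<lambda>z. Inu u sa R 2 z + Inu u sa R 1 z) s = - c * E 2 + - c * E 1"
      by (rule DERIV_imp_deriv[OF DERIV_add[OF Id' Id']])
    also have "\<dots> = u * (- c * E 1) - 1/4 * (c * (2 * K 0 s)) + (1 / (sa * R 1 s)) / 2"
      by (rule alg2[OF P1 cX])
    finally show ?thesis unfolding dI I0 by simp
  qed
  have G3: "deriv (\<lambda>z. Inu u sa R 3 z - Inu u sa R 1 z) s
            = (u^2 - 2*u) * deriv (Inu u sa R 1) s - (3/4) * Inu u sa R 1 s
              + (u - 1) / 4 * Inu u sa R 0 s + u / (sa * R 1 s)"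
  proof -
    have "deriv (\<lambda>z. Inu u sa R 3 z - Inu u sa R 1 z) s = - c * E 3 - - c * E 1"
      by (rule DERIV_imp_deriv[OF DERIV_diff[OF Id' Id']])
    also have "\<dots> = (u^2 - 2*u) * (- c * E 1) - 3/4 * (c * (2 * K 1 s)) + (u - 1) / 4 * (c * (2 * K 0 s)) + u * (1 / (sa * R 1 s))"
      by (rule alg3[OF P1 _ cX]) (use P2 in \<open>simp add: mult.commute\<close>)
    finally show ?thesis unfolding dI I0 by simp
  qed
  show ?thesis using G1 G2 G3 by blast
qed
end
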